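(* Let $\mathcal{G}^{c}=(\mathbb{C},\mathbb{E}^{c})$ be a C-DMG over DMGs and $\mathbb{C}_X,\mathbb{C}_Y,\mathbb{C}_Z,\mathbb{C}_W$ pairwise disjoint subsets of $\mathbb{C}$, with $X,Y,Z,W$ the unions of the clusters in them. If the $\sigma$-separation condition of one of the three do-calculus rules fails in $\mathcal{G}^c$, then there exists a DMG $\mathcal{G}$ compatible with $\mathcal{G}^c$ in which the corresponding condition fails. Explicitly: (Rule 1) if $\mathbb{C}_Y$ and $\mathbb{C}_X$ are not $\sigma$-separated given $\mathbb{C}_W,do(\mathbb{C}_Z)$ in $\mathcal{G}^c$, then $Y$ and $X$ are not $\sigma$-separated given $W,do(Z)$ in $\mathcal{G}$; (Rule 2) if $\mathbb{C}_Y$ and $\mathbb{I}_{\mathbb{C}_X}$ are not $\sigma$-separated given $\mathbb{C}_X,\mathbb{C}_W,do(\mathbb{C}_Z)$ in $\mathcal{G}^c$, then $Y$ and $\mathbb{I}_X$ are not $\sigma$-separated given $X,W,do(Z)$ in $\mathcal{G}$; (Rule 3) if $\mathbb{C}_Y$ and $\mathbb{I}_{\mathbb{C}_X}$ are not $\sigma$-separated given $\mathbb{C}_W,do(\mathbb{C}_Z)$ in $\mathcal{G}^c$, then $Y$ and $\mathbb{I}_X$ are not $\sigma$-separated given $W,do(Z)$ in $\mathcal{G}$.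
   Context: A DMG $\mathcal{G}=(\mathbb{V},\mathbb{E})$ has directed edges $\to$ and bidirected edges $\leftrightarrow$, cycles allowed (DMGs induced by input/output structural causal models in the sense of Forré–Mooij 2020). A C-DMG over DMGs $\mathcal{G}^c=(\mathbb{C},\mathbb{E}^c)$ is obtained from such a DMG: $\mathbb{C}$ is a partition of $\mathbb{V}$ into nonempty clusters, and for all $C_i,C_j$ (possibly equal) $C_i\to C_j$ (resp. $C_i\leftrightarrow C_j$) is in $\mathbb{E}^c$ iff some $V_i\in C_i,V_j\in C_j$ have $V_i\to V_j$ (resp. $V_i\leftrightarrow V_j$) in $\mathbb{E}$; $\mathcal{G}$ is then compatible with $\mathcal{G}^c$. Extended graph: add for every vertex $V$ a new vertex $I_V$ and edge $I_V\to V$; $\mathbb{I}_{\mathbb{C}_X}=\{I_C:C\in\mathbb{C}_X\}$, $\mathbb{I}_X=\{I_V:V\in X\}$. "$A$ and $B$ are $\sigma$-separated given $C,do(D)$ in $\mathcal{G}^*$" means: in the extended graph of $\mathcal{G}^*$ with all directed edges into $D$ and all bidirected edges incident to $D$ removed, $A$ and $B$ are $\sigma$-separated by $C\cup D$. $\sigma$-separation: with $\mathrm{Sc}(V)=\mathrm{Anc}(V)\cap\mathrm{Desc}(V)$ (a vertex is its own ancestor/descendant), $A\mathbin{*\!\!\to}B$ meaning $A\to B$ or $A\leftrightarrow B$, $A\mathbin{\leftarrow\!\!*}B$ meaning $A\leftarrow B$ or $A\leftrightarrow B$, a walk $\langle V_1,\dots,V_n\rangle$ is $\sigma$-blocked by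 $W$ if (1) $V_1\in W$ or $V_n\in W$; or for some $1<i<n$: (2) $V_{i-1}\mathbin{*\!\!\to}V_i\mathbin{\leftarrow\!\!*}V_{i+1}$ and $V_i\notin W$; (3) $V_{i-1}\leftarrow V_i\mathbin{\leftarrow\!\!*}V_{i+1}$ and $V_i\in W\setminus\mathrm{Sc}(V_{i-1})$; (4) $V_{i-1}\mathbin{*\!\!\to}V_i\to V_{i+1}$ and $V_i\in W\setminus\mathrm{Sc}(V_{i+1})$; (5) $V_{i-1}\leftarrow V_i\to V_{i+1}$ and $V_i\in W\setminus(\mathrm{Sc}(V_{i-1})\cap\mathrm{Sc}(V_{i+1}))$; $W$ $\sigma$-separates $A,B$ if every walk from $A$ to $B$ is $\sigma$-blocked by $W$. *)

theory Defs
  imports Main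
begin

text \<open>A DMG is given by a vertex set V, a directed edge relation D
  ((a,b) \<in> D means a \<rightarrow> b) and a bidirected edge relation B
  ((a,b) \<in> B means a \<leftrightarrow> b; B is symmetric).\<close>

definition dmg :: "'v set \<Rightarrow> ('v \<times> 'v) set \<Rightarrow> ('v \<times> 'v) set \<Rightarrow> bool" where
  "dmg V D B \<longleftrightarrow> finite V \<and> D \<subseteq> V \<times> V \<and> B \<subseteq> V \<times> V \<and> sym B
     \<and> irrefl D \<and> irrefl B"

datatype etype = Fwd | Bwd | Bid

fun edge_ok :: "('v \<times> 'v) set \<Rightarrow> ('v \<times> 'v) set \<Rightarrow> 'v \<Rightarrow> etype \<Rightarrow> 'v \<Rightarrow> bool" where
  "edge_ok D B a Fwd b = ((a, b) \<in> D)"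
| "edge_ok D B a Bwd b = ((b, a) \<in> D)"
| "edge_ok D B a Bid b = ((a, b) \<in> B)"

definition is_walk :: "'v set \<Rightarrow> ('v \<times> 'v) set \<Rightarrow> ('v \<times> 'v) set \<Rightarrow> 'v list \<Rightarrow> etype list \<Rightarrow> bool" where
  "is_walk V D B vs es \<longleftrightarrow> vs \<noteq> [] \<and> set vs \<subseteq> V \<and> length es = length vs - 1
     \<and> (\<forall>i < length es. edge_ok D B (vs ! i) (es ! i) (vs ! Suc i))"

definition anc :: "('v \<times> 'v) set \<Rightarrow> 'v \<Rightarrow> 'v set" where
  "anc D v = {u. (u, v) \<in> D\<^sup>*}"

definition desc :: "('v \<times> 'v) set \<Rightarrow> 'v \<Rightarrow> 'v set" where
  "desc D v = {u. (v, u) \<in> D\<^sup>*}"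

definition sc :: "('v \<times> 'v) set \<Rightarrow> 'v \<Rightarrow> 'v set" where
  "sc D v = anc D v \<inter> desc D v"

definition blocked_at :: "('v \<times> 'v) set \<Rightarrow> 'v set \<Rightarrow> 'v \<Rightarrow> etype \<Rightarrow> 'v \<Rightarrow> etype \<Rightarrow> 'v \<Rightarrow> bool" where
  "blocked_at D W prev l cur r nxt \<longleftrightarrow>
     (l \<in> {Fwd, Bid} \<and> r \<in> {Bwd, Bid} \<and> cur \<notin> W)
   \<or> (l = Bwd \<and> r \<in> {Bwd, Bid} \<and> cur \<in> W - sc D prev)
   \<or> (l \<in> {Fwd, Bid} \<and> r = Fwd \<and> cur \<in> W - sc D nxt)
   \<or> (l = Bwd \<and> r = Fwd \<and> cur \<in> W - (sc D prev \<inter> sc D nxt))"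

definition sigma_blocked :: "('v \<times> 'v) set \<Rightarrow> 'v list \<Rightarrow> etype list \<Rightarrow> 'v set \<Rightarrow> bool" where
  "sigma_blocked D vs es W \<longleftrightarrow> hd vs \<in> W \<or> last vs \<in> W
     \<or> (\<exists>i. 0 < i \<and> i < length vs - 1 \<and>
          blocked_at D W (vs ! (i - 1)) (es ! (i - 1)) (vs ! i) (es ! i) (vs ! Suc i))"

definition sigma_sep :: "'v set \<Rightarrow> ('v \<times> 'v) set \<Rightarrow> ('v \<times> 'v) set \<Rightarrow> 'v set \<Rightarrow> 'v set \<Rightarrow> 'v set \<Rightarrow> bool" where
  "sigma_sep V D B A A' W \<longleftrightarrow>
     (\<forall>vs es. is_walk V D B vs es \<and> hd vs \<in> A \<and> last vs \<in> A' \<longrightarrow> sigma_blocked D vs es W)"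

text \<open>Vertices of the extended graph: Inl v for the original vertex v, Inr v for I_v.\<close>

definition ext_V :: "'v set \<Rightarrow> ('v + 'v) set" where
  "ext_V V = Inl ` V \<union> Inr ` V"

definition ext_D :: "'v set \<Rightarrow> ('v \<times> 'v) set \<Rightarrow> (('v + 'v) \<times> ('v + 'v)) set" where
  "ext_D V D = {(Inl a, Inl b) | a b. (a, b) \<in> D} \<union> {(Inr v, Inl v) | v. v \<in> V}"

definition ext_B :: "('v \<times> 'v) set \<Rightarrow> (('v + 'v) \<times> ('v + 'v)) set" where
  "ext_B B = {(Inl a, Inl b) | a b. (a, b) \<in> B}"

definition cut_D :: "('a \<times> 'a) set \<Rightarrow> 'a set \<Rightarrow> ('a \<times> 'a) set" where
  "cut_D D S = {(a, b). (a, b) \<in> D \<and> b \<notin> S}"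

definition cut_B :: "('a \<times> 'a) set \<Rightarrow> 'a set \<Rightarrow> ('a \<times> 'a) set" where
  "cut_B B S = {(a, b). (a, b) \<in> B \<and> a \<notin> S \<and> b \<notin> S}"

definition sigma_sep_do :: "'v set \<Rightarrow> ('v \<times> 'v) set \<Rightarrow> ('v \<times> 'v) set \<Rightarrow>
    ('v + 'v) set \<Rightarrow> ('v + 'v) set \<Rightarrow> 'v set \<Rightarrow> 'v set \<Rightarrow> bool" where
  "sigma_sep_do V D B A A' C Z =
     sigma_sep (ext_V V) (cut_D (ext_D V D) (Inl ` Z)) (cut_B (ext_B B) (Inl ` Z))
       A A' (Inl ` (C \<union> Z))"

definition partition_of :: "'v set set \<Rightarrow> 'v set \<Rightarrow> bool" where
  "partition_of C V \<longleftrightarrow> (\<forall>c\<in>C. c \<noteq> {}) \<and> \<Union>C = V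
     \<and> (\<forall>c\<in>C. \<forall>d\<in>C. c \<noteq> d \<longrightarrow> c \<inter> d = {})"

definition compatible :: "'v set \<Rightarrow> ('v \<times> 'v) set \<Rightarrow> ('v \<times> 'v) set \<Rightarrow>
    'v set set \<Rightarrow> ('v set \<times> 'v set) set \<Rightarrow> ('v set \<times> 'v set) set \<Rightarrow> bool" where
  "compatible V D B C Dc Bc \<longleftrightarrow> dmg V D B \<and> partition_of C V
     \<and> Dc = {(ci, cj). ci \<in> C \<and> cj \<in> C \<and> (\<exists>vi\<in>ci. \<exists>vj\<in>cj. (vi, vj) \<in> D)}
     \<and> Bc = {(ci, cj). ci \<in> C \<and> cj \<in> C \<and> (\<exists>vi\<in>ci. \<exists>vj\<in>cj. (vi, vj) \<in> B)}"

definition cdmg :: "'v set set \<Rightarrow> ('v set \<times> 'v set) set \<Rightarrow> ('v set \<times> 'v set) set \<Rightarrow> bool" where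
  "cdmg C Dc Bc \<longleftrightarrow> (\<exists>V D B. compatible V D B C Dc Bc)"

end

theory Submission
  imports Defs
begin

lemma cutD_LL[simp]: "((Inl a, Inl b) \<in> cut_D (ext_D V D) (Inl ` Z)) = ((a,b) \<in> D \<and> b \<notin> Z)"
  by (auto simp: cut_D_def ext_D_def)
lemma cutD_RL[simp]: "((Inr a, Inl b) \<in> cut_D (ext_D V D) (Inl ` Z)) = (a = b \<and> a \<in> V \<and> b \<notin> Z)"
  by (auto simp: cut_D_def ext_D_def)
lemma cutD_xR[simp]: "(x, Inr b) \<notin> cut_D (ext_D V D) (Inl ` Z)"
  by (auto simp: cut_D_def ext_D_def)
lemma cutB_LL[simp]: "((Inl a, Inl b) \<in> cut_B (ext_B B) (Inl ` Z)) = ((a,b) \<in> B \<and> a \<notin> Z \<and> b \<notin> Z)"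
  by (auto simp: cut_B_def ext_B_def)
lemma cutB_R1[simp]: "(Inr a, y) \<notin> cut_B (ext_B B) (Inl ` Z)"
  by (auto simp: cut_B_def ext_B_def)
lemma cutB_R2[simp]: "(x, Inr a) \<notin> cut_B (ext_B B) (Inl ` Z)"
  by (auto simp: cut_B_def ext_B_def)

definition maxR :: "('v set \<times> 'v set) set \<Rightarrow> ('v \<times> 'v) set" where
  "maxR R = {(a,b). a \<noteq> b \<and> (\<exists>ci cj. a \<in> ci \<and> b \<in> cj \<and> (ci,cj) \<in> R)}"

definition pk0 :: "'v set \<Rightarrow> 'v" where "pk0 c = (SOME x. x \<in> c)"
definition pk1 :: "'v set \<Rightarrow> 'v" where
  "pk1 c = (if \<exists>x\<in>c. x \<noteq> pk0 c then (SOME y. y \<in> c \<and> y \<noteq> pk0 c) else pk0 c)"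
definition pk :: "'v set \<Rightarrow> nat \<Rightarrow> 'v" where
  "pk c k = (if k = 0 then pk0 c else pk1 c)"

lemma pk0_in: "c \<noteq> {} \<Longrightarrow> pk0 c \<in> c"
  unfolding pk0_def by (simp add: some_in_eq)

lemma pk1_in: "c \<noteq> {} \<Longrightarrow> pk1 c \<in> c"
proof -
  assume c: "c \<noteq> {}"
  show ?thesis
  proof (cases "\<exists>x\<in>c. x \<noteq> pk0 c")
    case True
    then obtain x where "x \<in> c \<and> x \<noteq> pk0 c" by blast
    then have "(SOME y. y \<in> c \<and> y \<noteq> pk0 c) \<in> c \<and> (SOME y. y \<in> c \<and> y \<noteq> pk0 c) \<noteq> pk0 c"
      by (rule someI[where P="\<lambda>y. y \<in> c \<and> y \<noteq> pk0 c"])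
    then show ?thesis using True unfolding pk1_def by simp
  next
    case False
    then have "pk1 c = pk0 c" unfolding pk1_def by (simp only: if_False)
    then show ?thesis using pk0_in[OF c] by simp
  qed
qed

lemma pk_in: assumes "c \<noteq> {}" shows "pk c k \<in> c"
  unfolding pk_def using pk0_in[OF assms] pk1_in[OF assms] by simp

lemma pk_neq: assumes "\<exists>x\<in>c. \<exists>y\<in>c. x\<noteq>y" shows "pk c 0 \<noteq> pk c (Suc 0)"
proof -
  have True: "\<exists>x\<in>c. x \<noteq> pk0 c"
  proof -
    obtain x y where "x \<in> c" "y \<in> c" "x \<noteq> y" using assms by blast
    show ?thesis
    proof (cases "x = pk0 c")
      case True
      then have "y \<noteq> pk0 c" using \<open>x \<noteq> y\<close> by simp
      then show ?thesis using \<open>y \<in> c\<close> by (rule_tac bexI)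
    next
      case False
      then show ?thesis using \<open>x \<in> c\<close> by (rule_tac bexI)
    qed
  qed
  then obtain x where "x \<in> c \<and> x \<noteq> pk0 c" by blast
  then have "(SOME y. y \<in> c \<and> y \<noteq> pk0 c) \<in> c \<and> (SOME y. y \<in> c \<and> y \<noteq> pk0 c) \<noteq> pk0 c"
    by (rule someI[where P="\<lambda>y. y \<in> c \<and> y \<noteq> pk0 c"])
  then have "pk1 c \<noteq> pk0 c" using True unfolding pk1_def by simp
  then show ?thesis unfolding pk_def by simp
qed

definition lift :: "nat \<Rightarrow> 'v set + 'v set \<Rightarrow> 'v + 'v" where
  "lift i x = (case x of Inl c \<Rightarrow> Inl (pk c (i mod 2)) | Inr c \<Rightarrow> Inr (pk c (Suc i mod 2)))"

definition lifts :: "'v set + 'v set \<Rightarrow> 'v + 'v \<Rightarrow> bool" where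
  "lifts x x' \<longleftrightarrow> (\<exists>c u. x = Inl c \<and> x' = Inl u \<and> u \<in> c) \<or> (\<exists>c u. x = Inr c \<and> x' = Inr u \<and> u \<in> c)"

locale setting =
  fixes V :: "'v set" and C :: "'v set set" and Dc Bc :: "('v set \<times> 'v set) set"
  assumes part: "partition_of C V"
  and Dc_sub: "Dc \<subseteq> C \<times> C" and Bc_sub: "Bc \<subseteq> C \<times> C"
  and loopD: "\<And>c. (c,c) \<in> Dc \<Longrightarrow> \<exists>x\<in>c. \<exists>y\<in>c. x\<noteq>y"
  and loopB: "\<And>c. (c,c) \<in> Bc \<Longrightarrow> \<exists>x\<in>c. \<exists>y\<in>c. x\<noteq>y"
begin

lemma same: "a \<in> C \<Longrightarrow> b \<in> C \<Longrightarrow> x \<in> a \<Longrightarrow> x \<in> b \<Longrightarrow> a = b"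
  using part unfolding partition_of_def by blast

lemma ne: "a \<in> C \<Longrightarrow> a \<noteq> {}"
  using part unfolding partition_of_def by blast

lemma pkC: "a \<in> C \<Longrightarrow> pk a k \<in> a" by (rule pk_in[OF ne])

lemma UC: "\<Union>C = V" using part unfolding partition_of_def by simp

lemma pkV: "a \<in> C \<Longrightarrow> pk a k \<in> V" using pkC UC by blast

lemma notinU: "Z \<subseteq> C \<Longrightarrow> b \<in> C \<Longrightarrow> v \<in> b \<Longrightarrow> (v \<in> \<Union>Z) = (b \<in> Z)"
  using same by blast

lemma pk_ne: assumes "a \<in> C" "b \<in> C" "(a,b) \<in> Dc \<or> (a,b) \<in> Bc" "k < 2" "k' < 2" "k \<noteq> k'"
  shows "pk a k \<noteq> pk b k'"
proof (cases "a = b")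
  case True
  then have "\<exists>x\<in>a. \<exists>y\<in>a. x\<noteq>y" using assms loopD loopB by blast
  then have "pk a 0 \<noteq> pk a (Suc 0)" by (rule pk_neq)
  moreover have "(k = 0 \<and> k' = 1) \<or> (k = 1 \<and> k' = 0)" using assms by auto
  ultimately show ?thesis using True by auto
next
  case False
  then show ?thesis using same assms pkC by metis
qed

lemma mod2: "i mod 2 < (2::nat)" "Suc i mod 2 < 2" "i mod 2 \<noteq> Suc i mod 2" "Suc i mod 2 \<noteq> i mod 2"
  "Suc (Suc i) mod 2 = i mod 2"
  by presburger+

lemma extV_cases: "x \<in> ext_V C \<Longrightarrow> (\<And>c. x = Inl c \<Longrightarrow> c \<in> C \<Longrightarrow> P) \<Longrightarrow> (\<And>c. x = Inr c \<Longrightarrow> c \<in> C \<Longrightarrow> P) \<Longrightarrow> P"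
  unfolding ext_V_def by blast

lemma lift_lifts: "x \<in> ext_V C \<Longrightarrow> lifts x (lift i x)"
  by (erule extV_cases) (auto simp: lifts_def lift_def pkC)

lemma lift_V: "x \<in> ext_V C \<Longrightarrow> lift i x \<in> ext_V V"
  by (erule extV_cases) (auto simp: ext_V_def lift_def pkV)

lemma lift_memL: "x \<in> ext_V C \<Longrightarrow> S \<subseteq> C \<Longrightarrow> (lift i x \<in> Inl ` \<Union>S) = (x \<in> Inl ` S)"
  apply (erule extV_cases)
   apply (simp add: lift_def image_iff)
   apply (metis notinU pkC UnionI)
  apply (auto simp: lift_def)
  done

lemma lift_memR: "x \<in> ext_V C \<Longrightarrow> S \<subseteq> C \<Longrightarrow> x \<in> Inr ` S \<Longrightarrow> lift i x \<in> Inr ` \<Union>S"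
proof -
  assume "x \<in> Inr ` S" "S \<subseteq> C"
  then obtain c where "x = Inr c" "c \<in> S" "c \<in> C" by blast
  moreover have "pk c (Suc i mod 2) \<in> \<Union>S" using pkC[of c] \<open>c \<in> S\<close> \<open>c \<in> C\<close> by blast
  ultimately show ?thesis unfolding lift_def by simp
qed

lemma lift_memL': "x \<in> ext_V C \<Longrightarrow> S \<subseteq> C \<Longrightarrow> x \<in> Inl ` S \<Longrightarrow> lift i x \<in> Inl ` \<Union>S"
  using lift_memL by blast


lemma maxR_I: "(a,b) \<in> R \<Longrightarrow> a \<in> C \<Longrightarrow> b \<in> C \<Longrightarrow> pk a k \<noteq> pk b k' \<Longrightarrow> (pk a k, pk b k') \<in> maxR R"
  unfolding maxR_def using pkC by blast

lemma pk_notZ: "Z \<subseteq> C \<Longrightarrow> b \<in> C \<Longrightarrow> b \<notin> Z \<Longrightarrow> pk b k \<notin> \<Union>Z"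
  using notinU pkC by blast

abbreviation "Dcc Z \<equiv> cut_D (ext_D C Dc) (Inl ` Z)"
abbreviation "Bcc Z \<equiv> cut_B (ext_B Bc) (Inl ` Z)"
abbreviation "Dvv Z \<equiv> cut_D (ext_D V (maxR Dc)) (Inl ` \<Union>Z)"
abbreviation "Bvv Z \<equiv> cut_B (ext_B (maxR Bc)) (Inl ` \<Union>Z)"

lemma edge_lift:
  assumes Z: "Z \<subseteq> C" and x: "x \<in> ext_V C" and y: "y \<in> ext_V C"
    and e: "edge_ok (Dcc Z) (Bcc Z) x t y"
  shows "edge_ok (Dvv Z) (Bvv Z) (lift i x) t (lift (Suc i) y)"
proof (cases t)
  case Fwd
  show ?thesis
  proof (rule extV_cases[OF x]; rule extV_cases[OF y])
    fix a b assume xa: "x = Inl a" "a \<in> C" and yb: "y = Inl b" "b \<in> C"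
    then have ab: "(a,b) \<in> Dc" "b \<notin> Z" using e Fwd by auto
    have "pk a (i mod 2) \<noteq> pk b (Suc i mod 2)" using pk_ne[of a b] xa yb ab mod2 by blast
    then show ?thesis using xa yb ab Fwd maxR_I pk_notZ[OF Z]
      by (simp add: lift_def)
  next
    fix a b assume "x = Inl a" "a \<in> C" and "y = Inr b" "b \<in> C"
    then show ?thesis using e Fwd by auto
  next
    fix a b assume xa: "x = Inr a" "a \<in> C" and yb: "y = Inl b" "b \<in> C"
    then show ?thesis using e Fwd pkV pk_notZ[OF Z] by (auto simp: lift_def)
  next
    fix a b assume "x = Inr a" "a \<in> C" and "y = Inr b" "b \<in> C"
    then show ?thesis using e Fwd by auto
  qed
next
  case Bwd
  show ?thesis
  proof (rule extV_cases[OF x]; rule extV_cases[OF y])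
    fix a b assume xa: "x = Inl a" "a \<in> C" and yb: "y = Inl b" "b \<in> C"
    then have ab: "(b,a) \<in> Dc" "a \<notin> Z" using e Bwd by auto
    have "pk b (Suc i mod 2) \<noteq> pk a (i mod 2)" using pk_ne[of b a] xa yb ab mod2 by blast
    then show ?thesis using xa yb ab Bwd maxR_I pk_notZ[OF Z]
      by (simp add: lift_def)
  next
    fix a b assume xa: "x = Inl a" "a \<in> C" and yb: "y = Inr b" "b \<in> C"
    then show ?thesis using e Bwd pkV pk_notZ[OF Z] mod2(5)[of i] by (auto simp: lift_def)
  next
    fix a b assume xa: "x = Inr a" "a \<in> C" and yb: "y = Inl b" "b \<in> C"
    then show ?thesis using e Bwd by auto
  next
    fix a b assume "x = Inr a" "a \<in> C" and "y = Inr b" "b \<in> C"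
    then show ?thesis using e Bwd by auto
  qed
next
  case Bid
  show ?thesis
  proof (rule extV_cases[OF x]; rule extV_cases[OF y])
    fix a b assume xa: "x = Inl a" "a \<in> C" and yb: "y = Inl b" "b \<in> C"
    then have ab: "(a,b) \<in> Bc" "a \<notin> Z" "b \<notin> Z" using e Bid by auto
    have "pk a (i mod 2) \<noteq> pk b (Suc i mod 2)" using pk_ne[of a b] xa yb ab mod2 by blast
    then show ?thesis using xa yb ab Bid maxR_I pk_notZ[OF Z]
      by (simp add: lift_def)
  qed (use e Bid in auto)
qed

lemma L:
  assumes "(Inl p, y) \<in> (Dcc Z)\<^sup>+" and Z: "Z \<subseteq> C"
  shows "\<exists>c. y = Inl c \<and> (\<forall>u\<in>p. \<forall>v\<in>c. u \<noteq> v \<longrightarrow> (Inl u, Inl v) \<in> (Dvv Z)\<^sup>+)"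
  using assms(1)
proof (induction y rule: trancl_induct)
  case (base y)
  show ?case
  proof (cases y)
    case (Inl c)
    then have pc: "(p,c) \<in> Dc" "c \<notin> Z" using base by auto
    then have cC: "c \<in> C" using Dc_sub by auto
    have "(Inl u, Inl v) \<in> (Dvv Z)\<^sup>+" if "u \<in> p" "v \<in> c" "u \<noteq> v" for u v
    proof -
      have "(u,v) \<in> maxR Dc" using that pc unfolding maxR_def by blast
      moreover have "v \<notin> \<Union>Z" using notinU[OF Z cC that(2)] pc by simp
      ultimately show ?thesis by auto
    qed
    then show ?thesis using Inl by blast
  next
    case (Inr c)
    then show ?thesis using base by simp
  qed
next
  case (step y z)
  from step.IH obtain c where yc: "y = Inl c"
    and IH: "\<forall>u\<in>p. \<forall>v\<in>c. u \<noteq> v \<longrightarrow> (Inl u, Inl v) \<in> (Dvv Z)\<^sup>+" by blast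
  show ?case
  proof (cases z)
    case (Inr e) then show ?thesis using step by simp
  next
    case (Inl e)
    then have ce: "(c,e) \<in> Dc" "e \<notin> Z" using step yc by auto
    then have cC: "c \<in> C" "e \<in> C" using Dc_sub by auto
    have edge: "(Inl w, Inl v) \<in> Dvv Z" if "w \<in> c" "v \<in> e" "w \<noteq> v" for w v
    proof -
      have "(w,v) \<in> maxR Dc" using that ce unfolding maxR_def by blast
      moreover have "v \<notin> \<Union>Z" using notinU[OF Z cC(2) that(2)] ce by simp
      ultimately show ?thesis by auto
    qed
    have "(Inl u, Inl v) \<in> (Dvv Z)\<^sup>+" if "u \<in> p" "v \<in> e" "u \<noteq> v" for u v
    proof (cases "u \<in> c")
      case True
      then show ?thesis using edge that by blast
    next
      case False
      obtain w where w: "w \<in> c" using ne[OF cC(1)] by blast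
      then have uw: "(Inl u, Inl w) \<in> (Dvv Z)\<^sup>+" using IH that False by metis
      show ?thesis
      proof (cases "w = v")
        case True then show ?thesis using uw by simp
      next
        case False then show ?thesis using uw edge[OF w that(2)] by (meson trancl_into_trancl)
      qed
    qed
    then show ?thesis using Inl by blast
  qed
qed


lemma SC:
  assumes Z: "Z \<subseteq> C" and yx: "(y,x) \<in> Dcc Z" and sc: "y \<in> sc (Dcc Z) x"
    and yx': "(y',x') \<in> Dvv Z" and ly: "lifts y y'" and lx: "lifts x x'"
  shows "y' \<in> sc (Dvv Z) x'"
proof -
  obtain d where xd: "x = Inl d" using yx by (cases x) auto
  have xy: "(x,y) \<in> (Dcc Z)\<^sup>*" using sc unfolding sc_def desc_def by auto
  have xy1: "(x,y) \<in> (Dcc Z)\<^sup>+"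
  proof (cases "x = y")
    case True then show ?thesis using yx by auto
  next
    case False then show ?thesis using xy by (meson rtranclD)
  qed
  obtain c where yc: "y = Inl c" and P: "\<forall>u\<in>d. \<forall>v\<in>c. u \<noteq> v \<longrightarrow> (Inl u, Inl v) \<in> (Dvv Z)\<^sup>+"
    using L[OF xy1[unfolded xd] Z] by blast
  obtain u where u: "x' = Inl u" "u \<in> d" using lx xd unfolding lifts_def by auto
  obtain v where v: "y' = Inl v" "v \<in> c" using ly yc unfolding lifts_def by auto
  have "u \<noteq> v" using yx' u v by (auto simp: maxR_def)
  then have "(Inl u, Inl v) \<in> (Dvv Z)\<^sup>+" using P u v by blast
  then have "(x', y') \<in> (Dvv Z)\<^sup>*" using u v by (simp add: trancl_into_rtrancl)
  moreover have "(y', x') \<in> (Dvv Z)\<^sup>*" using yx' by auto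
  ultimately show ?thesis unfolding sc_def anc_def desc_def by auto
qed

lemma blk:
  assumes Z: "Z \<subseteq> C"
    and e1: "edge_ok (Dcc Z) (Bcc Z) x l y" and e2: "edge_ok (Dcc Z) (Bcc Z) y r z"
    and e1': "edge_ok (Dvv Z) (Bvv Z) x' l y'" and e2': "edge_ok (Dvv Z) (Bvv Z) y' r z'"
    and lx: "lifts x x'" and ly: "lifts y y'" and lz: "lifts z z'"
    and W: "(y' \<in> Inl ` \<Union>S) = (y \<in> Inl ` S)"
    and b: "blocked_at (Dvv Z) (Inl ` \<Union>S) x' l y' r z'"
  shows "blocked_at (Dcc Z) (Inl ` S) x l y r z"
proof -
  have sc1: "y' \<in> sc (Dvv Z) x'" if "l = Bwd" "y \<in> sc (Dcc Z) x"
    using SC[OF Z _ that(2) _ ly lx] e1 e1' that(1) by simp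
  have sc2: "y' \<in> sc (Dvv Z) z'" if "r = Fwd" "y \<in> sc (Dcc Z) z"
    using SC[OF Z _ that(2) _ ly lz] e2 e2' that(1) by simp
  show ?thesis using b W sc1 sc2 unfolding blocked_at_def by blast
qed


lemma main:
  assumes Z: "Z \<subseteq> C" and S: "S \<subseteq> C"
    and hA: "\<And>x i. x \<in> ext_V C \<Longrightarrow> x \<in> A \<Longrightarrow> lift i x \<in> A'"
    and hB: "\<And>x i. x \<in> ext_V C \<Longrightarrow> x \<in> B \<Longrightarrow> lift i x \<in> B'"
    and ns: "\<not> sigma_sep (ext_V C) (Dcc Z) (Bcc Z) A B (Inl ` S)"
  shows "\<not> sigma_sep (ext_V V) (Dvv Z) (Bvv Z) A' B' (Inl ` \<Union>S)"
proof -
  obtain vs es where w: "is_walk (ext_V C) (Dcc Z) (Bcc Z) vs es" and hA0: "hd vs \<in> A"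
    and lB0: "last vs \<in> B" and nb: "\<not> sigma_blocked (Dcc Z) vs es (Inl ` S)"
    using ns unfolding sigma_sep_def by blast
  define n where "n = length vs"
  define ws where "ws = map (\<lambda>i. lift i (vs ! i)) [0..<n]"
  have ne: "vs \<noteq> []" and inV: "\<And>i. i < n \<Longrightarrow> vs ! i \<in> ext_V C"
    and les: "length es = n - 1"
    and ed: "\<And>i. i < length es \<Longrightarrow> edge_ok (Dcc Z) (Bcc Z) (vs ! i) (es ! i) (vs ! Suc i)"
    using w unfolding is_walk_def n_def by auto
  have n0: "n > 0" using ne n_def by auto
  have lw: "length ws = n" unfolding ws_def by simp
  have wsi: "\<And>i. i < n \<Longrightarrow> ws ! i = lift i (vs ! i)" unfolding ws_def by simp
  have ed': "edge_ok (Dvv Z) (Bvv Z) (ws ! i) (es ! i) (ws ! Suc i)" if "i < length es" for i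
  proof -
    have "Suc i < n" using that les by simp
    then show ?thesis using edge_lift[OF Z inV inV ed[OF that]] wsi by simp
  qed
  have w': "is_walk (ext_V V) (Dvv Z) (Bvv Z) ws es"
    unfolding is_walk_def
  proof (intro conjI allI impI)
    show "ws \<noteq> []" using lw n0 by auto
    show "set ws \<subseteq> ext_V V"
    proof
      fix a assume "a \<in> set ws"
      then obtain i where "i < n" "a = ws ! i" using lw by (metis in_set_conv_nth)
      then show "a \<in> ext_V V" using wsi lift_V inV by simp
    qed
    show "length es = length ws - 1" using les lw by simp
    show "\<And>i. i < length es \<Longrightarrow> edge_ok (Dvv Z) (Bvv Z) (ws ! i) (es ! i) (ws ! Suc i)"
      by (rule ed')
  qed
  have hd': "hd ws = lift 0 (hd vs)" using wsi n0 ne lw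
    by (metis hd_conv_nth length_greater_0_conv)
  have last': "last ws = lift (n-1) (last vs)" using wsi n0 ne lw n_def
    by (metis last_conv_nth diff_less length_greater_0_conv zero_less_one)
  have hdC: "hd vs \<in> ext_V C" using inV n0 ne n_def by (metis hd_conv_nth)
  have lastC: "last vs \<in> ext_V C" using inV n0 ne n_def by (metis last_conv_nth diff_less zero_less_one)
  have "\<not> sigma_blocked (Dvv Z) ws es (Inl ` \<Union>S)"
    unfolding sigma_blocked_def
  proof (intro notI, elim disjE exE conjE)
    assume "hd ws \<in> Inl ` \<Union>S"
    then show False using hd' lift_memL[OF hdC S] nb unfolding sigma_blocked_def by simp
  next
    assume "last ws \<in> Inl ` \<Union>S"
    then show False using last' lift_memL[OF lastC S] nb unfolding sigma_blocked_def by simp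
  next
    fix i assume i: "0 < i" "i < length ws - 1"
      and b: "blocked_at (Dvv Z) (Inl ` \<Union>S) (ws ! (i - 1)) (es ! (i - 1)) (ws ! i) (es ! i) (ws ! Suc i)"
    have i1: "i - 1 < length es" "i < length es" "Suc (i - 1) = i" using i lw les by auto
    have iv: "i - 1 < n" "i < n" "Suc i < n" using i lw by auto
    have "blocked_at (Dcc Z) (Inl ` S) (vs ! (i - 1)) (es ! (i - 1)) (vs ! i) (es ! i) (vs ! Suc i)"
    proof (rule blk[OF Z _ _ _ _ _ _ _ _ b])
      show "edge_ok (Dcc Z) (Bcc Z) (vs ! (i - 1)) (es ! (i - 1)) (vs ! i)"
        using ed[OF i1(1)] i1(3) by simp
      show "edge_ok (Dcc Z) (Bcc Z) (vs ! i) (es ! i) (vs ! Suc i)" using ed[OF i1(2)] .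
      show "edge_ok (Dvv Z) (Bvv Z) (ws ! (i - 1)) (es ! (i - 1)) (ws ! i)"
        using ed'[OF i1(1)] i1(3) by simp
      show "edge_ok (Dvv Z) (Bvv Z) (ws ! i) (es ! i) (ws ! Suc i)" using ed'[OF i1(2)] .
      show "lifts (vs ! (i - 1)) (ws ! (i - 1))" using lift_lifts inV wsi iv by simp
      show "lifts (vs ! i) (ws ! i)" using lift_lifts inV wsi iv by simp
      show "lifts (vs ! Suc i) (ws ! Suc i)" using lift_lifts inV wsi iv by simp
      show "(ws ! i \<in> Inl ` \<Union>S) = (vs ! i \<in> Inl ` S)" using lift_memL[OF inV S] wsi iv by simp
    qed
    then show False using nb i lw n_def unfolding sigma_blocked_def by auto
  qed
  moreover have "hd ws \<in> A'" using hd' hA hdC hA0 by simp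
  moreover have "last ws \<in> B'" using last' hB lastC lB0 by simp
  ultimately show ?thesis using w' unfolding sigma_sep_def by blast
qed


lemma main_do:
  assumes Z: "Z \<subseteq> C" and SW: "SW \<subseteq> C"
    and hA: "\<And>x i. x \<in> ext_V C \<Longrightarrow> x \<in> A \<Longrightarrow> lift i x \<in> A'"
    and hB: "\<And>x i. x \<in> ext_V C \<Longrightarrow> x \<in> B \<Longrightarrow> lift i x \<in> B'"
    and ns: "\<not> sigma_sep_do C Dc Bc A B SW Z"
  shows "\<not> sigma_sep_do V (maxR Dc) (maxR Bc) A' B' (\<Union>SW) (\<Union>Z)"
proof -
  have S: "SW \<union> Z \<subseteq> C" using Z SW by auto
  have eq: "\<Union>SW \<union> \<Union>Z = \<Union>(SW \<union> Z)" by auto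
  show ?thesis using main[OF Z S hA hB] ns unfolding sigma_sep_do_def eq by blast
qed

end

lemma compat_setting:
  assumes "compatible V0 D0 B0 C Dc Bc"
  shows "setting V0 C Dc Bc"
proof
  show "partition_of C V0" using assms unfolding compatible_def by blast
  show "Dc \<subseteq> C \<times> C" "Bc \<subseteq> C \<times> C" using assms unfolding compatible_def by auto
  have Dc: "Dc = {(ci, cj). ci \<in> C \<and> cj \<in> C \<and> (\<exists>vi\<in>ci. \<exists>vj\<in>cj. (vi, vj) \<in> D0)}"
    and Bc: "Bc = {(ci, cj). ci \<in> C \<and> cj \<in> C \<and> (\<exists>vi\<in>ci. \<exists>vj\<in>cj. (vi, vj) \<in> B0)}"
    and ir: "irrefl D0" "irrefl B0"
    using assms unfolding compatible_def dmg_def by auto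
  show "\<exists>x\<in>c. \<exists>y\<in>c. x \<noteq> y" if "(c,c) \<in> Dc" for c
  proof -
    have "\<exists>vi\<in>c. \<exists>vj\<in>c. (vi, vj) \<in> D0" using that by (subst (asm) Dc) simp
    then obtain vi vj where "vi \<in> c" "vj \<in> c" "(vi, vj) \<in> D0" by blast
    moreover then have "vi \<noteq> vj" using ir(1) unfolding irrefl_def by blast
    ultimately show ?thesis by blast
  qed
  show "\<exists>x\<in>c. \<exists>y\<in>c. x \<noteq> y" if "(c,c) \<in> Bc" for c
  proof -
    have "\<exists>vi\<in>c. \<exists>vj\<in>c. (vi, vj) \<in> B0" using that by (subst (asm) Bc) simp
    then obtain vi vj where "vi \<in> c" "vj \<in> c" "(vi, vj) \<in> B0" by blast
    moreover then have "vi \<noteq> vj" using ir(2) unfolding irrefl_def by blast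
    ultimately show ?thesis by blast
  qed
qed

lemma compat_max:
  assumes c: "compatible V0 D0 B0 C Dc Bc"
  shows "compatible V0 (maxR Dc) (maxR Bc) C Dc Bc"
proof -
  have p: "partition_of C V0" and d: "dmg V0 D0 B0"
    and Dc: "Dc = {(ci, cj). ci \<in> C \<and> cj \<in> C \<and> (\<exists>vi\<in>ci. \<exists>vj\<in>cj. (vi, vj) \<in> D0)}"
    and Bc: "Bc = {(ci, cj). ci \<in> C \<and> cj \<in> C \<and> (\<exists>vi\<in>ci. \<exists>vj\<in>cj. (vi, vj) \<in> B0)}"
    using c unfolding compatible_def by auto
  have same: "\<And>a b x. a \<in> C \<Longrightarrow> b \<in> C \<Longrightarrow> x \<in> a \<Longrightarrow> x \<in> b \<Longrightarrow> a = b"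
    using p unfolding partition_of_def by blast
  have U: "\<Union>C = V0" using p unfolding partition_of_def by blast
  have ir: "irrefl D0" "irrefl B0" "sym B0" using d unfolding dmg_def by auto
  have gen: "R = {(ci, cj). ci \<in> C \<and> cj \<in> C \<and> (\<exists>vi\<in>ci. \<exists>vj\<in>cj. (vi, vj) \<in> maxR R)}"
    if R: "R = {(ci, cj). ci \<in> C \<and> cj \<in> C \<and> (\<exists>vi\<in>ci. \<exists>vj\<in>cj. (vi, vj) \<in> E)}"
      and irE: "irrefl E" for R E
  proof (intro set_eqI iffI)
    fix pr assume "pr \<in> R"
    then obtain ci cj where pr: "pr = (ci,cj)" "ci \<in> C" "cj \<in> C" "(ci,cj) \<in> R"
      and "\<exists>vi\<in>ci. \<exists>vj\<in>cj. (vi, vj) \<in> E" using R by blast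
    then obtain vi vj where "vi \<in> ci" "vj \<in> cj" "(vi,vj) \<in> E" by blast
    moreover then have "vi \<noteq> vj" using irE unfolding irrefl_def by blast
    ultimately show "pr \<in> {(ci, cj). ci \<in> C \<and> cj \<in> C \<and> (\<exists>vi\<in>ci. \<exists>vj\<in>cj. (vi, vj) \<in> maxR R)}"
      using pr unfolding maxR_def by blast
  next
    fix pr assume "pr \<in> {(ci, cj). ci \<in> C \<and> cj \<in> C \<and> (\<exists>vi\<in>ci. \<exists>vj\<in>cj. (vi, vj) \<in> maxR R)}"
    then obtain ci cj vi vj where pr: "pr = (ci,cj)" "ci \<in> C" "cj \<in> C" "vi \<in> ci" "vj \<in> cj"
      and m: "(vi,vj) \<in> maxR R" by blast
    from m obtain ci' cj' where "vi \<in> ci'" "vj \<in> cj'" "(ci',cj') \<in> R" unfolding maxR_def by blast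
    moreover then have "ci' \<in> C" "cj' \<in> C" using R by auto
    ultimately show "pr \<in> R" using pr same by metis
  qed
  have sub: "maxR R \<subseteq> V0 \<times> V0" if "R \<subseteq> C \<times> C" for R
    using that U unfolding maxR_def by blast
  have symB: "sym (maxR Bc)"
  proof -
    have "sym Bc" unfolding sym_def using Bc ir(3) unfolding sym_def by blast
    then show ?thesis unfolding sym_def maxR_def by blast
  qed
  have DcC: "Dc \<subseteq> C \<times> C" by (subst Dc) blast
  have BcC: "Bc \<subseteq> C \<times> C" by (subst Bc) blast
  have fin: "finite V0" using d unfolding dmg_def by blast
  have irr: "irrefl (maxR Dc)" "irrefl (maxR Bc)" unfolding irrefl_def maxR_def by auto
  have "dmg V0 (maxR Dc) (maxR Bc)"
    unfolding dmg_def using fin sub[OF DcC] sub[OF BcC] symB irr by blast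
  then show ?thesis unfolding compatible_def using p gen[OF Dc ir(1)] gen[OF Bc ir(2)] by blast
qed

theorem theorem4:
  fixes C :: "'v set set"
    and Dc Bc :: "('v set \<times> 'v set) set"
    and CX CY CZ CW :: "'v set set"
  assumes "cdmg C Dc Bc"
    and "CX \<subseteq> C" "CY \<subseteq> C" "CZ \<subseteq> C" "CW \<subseteq> C"
    and "CX \<inter> CY = {}" "CX \<inter> CZ = {}" "CX \<inter> CW = {}"
    and "CY \<inter> CZ = {}" "CY \<inter> CW = {}" "CZ \<inter> CW = {}"
  shows
    "(\<not> sigma_sep_do C Dc Bc (Inl ` CY) (Inl ` CX) CW CZ \<longrightarrow>
       (\<exists>V D B. compatible V D B C Dc Bc \<and>
          \<not> sigma_sep_do V D B (Inl ` \<Union>CY) (Inl ` \<Union>CX) (\<Union>CW) (\<Union>CZ)))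
   \<and> (\<not> sigma_sep_do C Dc Bc (Inl ` CY) (Inr ` CX) (CX \<union> CW) CZ \<longrightarrow>
       (\<exists>V D B. compatible V D B C Dc Bc \<and>
          \<not> sigma_sep_do V D B (Inl ` \<Union>CY) (Inr ` \<Union>CX) (\<Union>CX \<union> \<Union>CW) (\<Union>CZ)))
   \<and> (\<not> sigma_sep_do C Dc Bc (Inl ` CY) (Inr ` CX) CW CZ \<longrightarrow>
       (\<exists>V D B. compatible V D B C Dc Bc \<and>
          \<not> sigma_sep_do V D B (Inl ` \<Union>CY) (Inr ` \<Union>CX) (\<Union>CW) (\<Union>CZ)))"
  proof -
  obtain V0 D0 B0 where c: "compatible V0 D0 B0 C Dc Bc" using assms(1) unfolding cdmg_def by blast
  interpret setting V0 C Dc Bc by (rule compat_setting[OF c])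
  have cm: "compatible V0 (maxR Dc) (maxR Bc) C Dc Bc" by (rule compat_max[OF c])
  have hY: "\<And>x i. x \<in> ext_V C \<Longrightarrow> x \<in> Inl ` CY \<Longrightarrow> lift i x \<in> Inl ` \<Union>CY"
    using lift_memL' assms(3) by blast
  have hXl: "\<And>x i. x \<in> ext_V C \<Longrightarrow> x \<in> Inl ` CX \<Longrightarrow> lift i x \<in> Inl ` \<Union>CX"
    using lift_memL' assms(2) by blast
  have hXr: "\<And>x i. x \<in> ext_V C \<Longrightarrow> x \<in> Inr ` CX \<Longrightarrow> lift i x \<in> Inr ` \<Union>CX"
    using lift_memR assms(2) by blast
  have XW: "CX \<union> CW \<subseteq> C" using assms by auto
  have eq: "\<Union>(CX \<union> CW) = \<Union>CX \<union> \<Union>CW" by auto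
  show ?thesis
  proof (intro conjI impI)
    assume "\<not> sigma_sep_do C Dc Bc (Inl ` CY) (Inl ` CX) CW CZ"
    then have "\<not> sigma_sep_do V0 (maxR Dc) (maxR Bc) (Inl ` \<Union>CY) (Inl ` \<Union>CX) (\<Union>CW) (\<Union>CZ)"
      using main_do[OF assms(4) assms(5) hY hXl] by blast
    then show "\<exists>V D B. compatible V D B C Dc Bc \<and>
          \<not> sigma_sep_do V D B (Inl ` \<Union>CY) (Inl ` \<Union>CX) (\<Union>CW) (\<Union>CZ)"
      using cm by blast
  next
    assume "\<not> sigma_sep_do C Dc Bc (Inl ` CY) (Inr ` CX) (CX \<union> CW) CZ"
    then have "\<not> sigma_sep_do V0 (maxR Dc) (maxR Bc) (Inl ` \<Union>CY) (Inr ` \<Union>CX) (\<Union>(CX \<union> CW)) (\<Union>CZ)"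
      using main_do[OF assms(4) XW hY hXr] by blast
    then show "\<exists>V D B. compatible V D B C Dc Bc \<and>
          \<not> sigma_sep_do V D B (Inl ` \<Union>CY) (Inr ` \<Union>CX) (\<Union>CX \<union> \<Union>CW) (\<Union>CZ)"
      using cm unfolding eq by blast
  next
    assume "\<not> sigma_sep_do C Dc Bc (Inl ` CY) (Inr ` CX) CW CZ"
    then have "\<not> sigma_sep_do V0 (maxR Dc) (maxR Bc) (Inl ` \<Union>CY) (Inr ` \<Union>CX) (\<Union>CW) (\<Union>CZ)"
      using main_do[OF assms(4) assms(5) hY hXr] by blast
    then show "\<exists>V D B. compatible V D B C Dc Bc \<and>
          \<not> sigma_sep_do V D B (Inl ` \<Union>CY) (Inr ` \<Union>CX) (\<Union>CW) (\<Union>CZ)"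
      using cm by blast
  qed
qed

end
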